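(* Let $L:\mathbb{R}^k\to\mathbb{R}^{m+1}$ be a linear map such that $t(L)<t(L_{[m]})$. Then \[ t(L)\leq \max\left\{ \tfrac34\, t(L_{[m]}),\ t(L_{[m]})-2^{k-s-1}\right\},\] where $s=|S(L_{[m]})|$.
   Context: $\mathbb{H}^n=\{0,1\}^n$, $e_1,\dots,e_k$ the standard basis of $\mathbb{R}^k$. For a linear map $L:\mathbb{R}^k\to\mathbb{R}^n$, $t(L)=|L^{-1}(\mathbb{H}^n)\cap\mathbb{H}^k|$ and $S(L)=\{i\in[k]:L(e_i)\neq0\}$. For $A\subseteq[m+1]$, $L_A=\pi_A\circ L:\mathbb{R}^k\to\mathbb{R}^{|A|}$, where $\pi_A$ is the projection onto the coordinates in $A$; in particular $L_{[m]}$ consists of the first $m$ coordinates of $L$. *)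

theory Defs
  imports "HOL-Analysis.Analysis"
begin

text \<open>A linear map L : R^k -> R^n is represented by its matrix
  L :: nat => nat => real, entry L i j for row i < n and column j < k.
  Points of R^k are functions nat => real, only coordinates j < k matter.\<close>

definition hcube :: "nat \<Rightarrow> (nat \<Rightarrow> real) set" where
  "hcube k = ({..<k} \<rightarrow>\<^sub>E {0, 1})"

definition lin_apply :: "(nat \<Rightarrow> nat \<Rightarrow> real) \<Rightarrow> nat \<Rightarrow> (nat \<Rightarrow> real) \<Rightarrow> nat \<Rightarrow> real" where
  "lin_apply L k x i = (\<Sum>j<k. L i j * x j)"

text \<open>t(L) for L : R^k -> R^n (only rows i < n are used): number of points of
  the k-cube mapped into the n-cube. Taking n = m gives t(L_[m]).\<close>
definition tcount :: "(nat \<Rightarrow> nat \<Rightarrow> real) \<Rightarrow> nat \<Rightarrow> nat \<Rightarrow> nat" where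
  "tcount L k n = card {x \<in> hcube k. \<forall>i<n. lin_apply L k x i \<in> {0, 1}}"

definition supp_set :: "(nat \<Rightarrow> nat \<Rightarrow> real) \<Rightarrow> nat \<Rightarrow> nat \<Rightarrow> nat set" where
  "supp_set L k n = {j. j < k \<and> (\<exists>i<n. L i j \<noteq> 0)}"

end

theory Submission
  imports Defs
begin

lemma lin_upd:
  assumes "j < k"
  shows "lin_apply L k (x(j:=v)) i = lin_apply L k x i + L i j * (v - x j)"
proof -
  have "(\<Sum>l<k. L i l * (x(j:=v)) l) = (\<Sum>l<k. L i l * x l + (if l = j then L i j * (v - x j) else 0))"
    by (rule sum.cong) (auto simp: algebra_simps)
  also have "\<dots> = (\<Sum>l<k. L i l * x l) + L i j * (v - x j)"
    using assms by (simp add: sum.distrib)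
  finally show ?thesis unfolding lin_apply_def .
qed

lemma hcube_upd: "x \<in> hcube k \<Longrightarrow> j < k \<Longrightarrow> v \<in> {0,1} \<Longrightarrow> x(j:=v) \<in> hcube k"
  unfolding hcube_def by (auto simp: PiE_iff extensional_def)

lemma hcube_01: "x \<in> hcube k \<Longrightarrow> j < k \<Longrightarrow> x j = 0 \<or> x j = 1"
  unfolding hcube_def by (auto simp: PiE_iff extensional_def)

lemma finite_hcube: "finite (hcube k)"
  unfolding hcube_def by (auto intro: finite_PiE)

theorem lemma4p2:
  fixes L :: "nat \<Rightarrow> nat \<Rightarrow> real" and k m :: nat
  assumes "tcount L k (m + 1) < tcount L k m"
  shows "real (tcount L k (m + 1))
           \<le> max (3 / 4 * real (tcount L k m))
                   (real (tcount L k m) - 2 powr (real k - real (card (supp_set L k m)) - 1))"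
proof -
  define A where "A = {x \<in> hcube k. \<forall>i<m. lin_apply L k x i \<in> {0, 1}}"
  define B where "B = {x \<in> A. lin_apply L k x m \<in> {0, 1}}"
  define S where "S = supp_set L k m"
  have tA: "tcount L k m = card A" unfolding tcount_def A_def ..
  have tB: "tcount L k (m+1) = card B" unfolding tcount_def B_def A_def
    by (rule arg_cong[where f=card]) (auto simp: less_Suc_eq)
  have finA: "finite A" unfolding A_def using finite_hcube by auto
  have BA: "B \<subseteq> A" unfolding B_def by auto
  have cardAB: "card A = card B + card (A - B)"
    using finA BA by (metis card_Diff_subset card_mono diff_add_inverse finite_subset le_add_diff_inverse)
  have finB: "finite B" using finA BA finite_subset by blast
  have notS: "\<And>j i. j < k \<Longrightarrow> j \<notin> S \<Longrightarrow> i < m \<Longrightarrow> L i j = 0"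
    unfolding S_def supp_set_def by auto
  define N where "N = {j. j < k \<and> j \<notin> S \<and> L m j \<noteq> 0}"
  define R' where "R' = {j. j < k \<and> j \<notin> S \<and> L m j = 0}"
  have Sk: "S \<subseteq> {..<k}" unfolding S_def supp_set_def by auto
  have cardR: "card R' + card N = k - card S"
  proof -
    have "R' \<union> N = {..<k} - S" "R' \<inter> N = {}" unfolding R'_def N_def by auto
    moreover have "finite R'" "finite N" unfolding R'_def N_def by auto
    ultimately have "card R' + card N = card ({..<k} - S)" by (metis card_Un_disjoint)
    also have "\<dots> = k - card S" using Sk by (simp add: card_Diff_subset finite_subset)
    finally show ?thesis .
  qed
  have cardS: "card S \<le> k" using Sk by (metis card_lessThan card_mono finite_lessThan)
  show ?thesis
  proof (cases "2 \<le> card N")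
    case True
    have "\<not> (\<forall>a\<in>N. \<forall>b\<in>N. a = b)"
    proof
      assume "\<forall>a\<in>N. \<forall>b\<in>N. a = b"
      then have "card N \<le> Suc 0" using card_le_Suc0_iff_eq[of N] N_def by auto
      then show False using True by simp
    qed
    then obtain j1 j2 where j: "j1 \<in> N" "j2 \<in> N" "j1 \<noteq> j2" by blast
    define \<sigma>1 where "\<sigma>1 = (\<lambda>x::nat\<Rightarrow>real. x(j1 := 1 - x j1))"
    define \<sigma>2 where "\<sigma>2 = (\<lambda>x::nat\<Rightarrow>real. x(j2 := 1 - x j2))"
    have inv1: "\<And>x. \<sigma>1 (\<sigma>1 x) = x" unfolding \<sigma>1_def by auto
    have inv2: "\<And>x. \<sigma>2 (\<sigma>2 x) = x" unfolding \<sigma>2_def by auto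
    have j1k: "j1 < k" "j1 \<notin> S" "L m j1 \<noteq> 0" using j N_def by auto
    have j2k: "j2 < k" "j2 \<notin> S" "L m j2 \<noteq> 0" using j N_def by auto
    have A1: "\<sigma>1 x \<in> A" if "x \<in> A" for x
    proof -
      have "x \<in> hcube k" using that A_def by auto
      then have h: "\<sigma>1 x \<in> hcube k" unfolding \<sigma>1_def using hcube_01[of x k j1] j1k
        by (intro hcube_upd) auto
      have "lin_apply L k (\<sigma>1 x) i = lin_apply L k x i" if "i < m" for i
        unfolding \<sigma>1_def using lin_upd[OF j1k(1)] notS[OF j1k(1,2) that] by simp
      then show ?thesis using h that A_def by auto
    qed
    have A2: "\<sigma>2 x \<in> A" if "x \<in> A" for x
    proof -
      have "x \<in> hcube k" using that A_def by auto
      then have h: "\<sigma>2 x \<in> hcube k" unfolding \<sigma>2_def using hcube_01[of x k j2] j2k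
        by (intro hcube_upd) auto
      have "lin_apply L k (\<sigma>2 x) i = lin_apply L k x i" if "i < m" for i
        unfolding \<sigma>2_def using lin_upd[OF j2k(1)] notS[OF j2k(1,2) that] by simp
      then show ?thesis using h that A_def by auto
    qed
    have cover: "A \<subseteq> (A - B) \<union> \<sigma>1 ` (A - B) \<union> \<sigma>2 ` (A - B) \<union> (\<sigma>2 \<circ> \<sigma>1) ` (A - B)"
    proof
      fix x assume xA: "x \<in> A"
      have xh: "x \<in> hcube k" using xA A_def by auto
      define u where "u = lin_apply L k x m"
      define d1 where "d1 = L m j1 * (1 - 2 * x j1)"
      define d2 where "d2 = L m j2 * (1 - 2 * x j2)"
      have d1: "d1 \<noteq> 0" unfolding d1_def using j1k hcube_01[OF xh j1k(1)] by auto
      have d2: "d2 \<noteq> 0" unfolding d2_def using j2k hcube_01[OF xh j2k(1)] by auto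
      have f1: "lin_apply L k (\<sigma>1 x) m = u + d1"
        unfolding \<sigma>1_def u_def d1_def using lin_upd[OF j1k(1)] by simp
      have f2: "lin_apply L k (\<sigma>2 x) m = u + d2"
        unfolding \<sigma>2_def u_def d2_def using lin_upd[OF j2k(1)] by simp
      have f12: "lin_apply L k (\<sigma>1 (\<sigma>2 x)) m = u + d2 + d1"
        using f2 lin_upd[OF j1k(1), of L "\<sigma>2 x" "1 - \<sigma>2 x j1" m] j(3)
        unfolding \<sigma>1_def d1_def by (simp add: \<sigma>2_def)
      have notall: "\<not> (u \<in> {0,1} \<and> u + d1 \<in> {0,1} \<and> u + d2 \<in> {0,1} \<and> u + d2 + d1 \<in> {0,1})"
        using d1 d2 by auto
      show "x \<in> (A - B) \<union> \<sigma>1 ` (A - B) \<union> \<sigma>2 ` (A - B) \<union> (\<sigma>2 \<circ> \<sigma>1) ` (A - B)"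
      proof (cases "u \<in> {0,1}")
        case False then show ?thesis using xA B_def u_def by auto
      next
        case u: True
        show ?thesis
        proof (cases "u + d1 \<in> {0,1}")
          case False
          then have "\<sigma>1 x \<in> A - B" using A1[OF xA] f1 B_def by auto
          then have "\<sigma>1 (\<sigma>1 x) \<in> \<sigma>1 ` (A - B)" by blast
          then show ?thesis using inv1 by auto
        next
          case ud1: True
          show ?thesis
          proof (cases "u + d2 \<in> {0,1}")
            case False
            then have "\<sigma>2 x \<in> A - B" using A2[OF xA] f2 B_def by auto
            then have "\<sigma>2 (\<sigma>2 x) \<in> \<sigma>2 ` (A - B)" by blast
            then show ?thesis using inv2 by auto
          next
            case True
            then have "u + d2 + d1 \<notin> {0,1}" using notall u ud1 by blast
            then have "\<sigma>1 (\<sigma>2 x) \<in> A - B" using A1[OF A2[OF xA]] f12 B_def by auto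
            then have "(\<sigma>2 \<circ> \<sigma>1) (\<sigma>1 (\<sigma>2 x)) \<in> (\<sigma>2 \<circ> \<sigma>1) ` (A - B)" by blast
            then show ?thesis using inv1 inv2 by auto
          qed
        qed
      qed
    qed
    have finD: "finite (A - B)" using finA by auto
    have "card A \<le> card ((A - B) \<union> \<sigma>1 ` (A - B) \<union> \<sigma>2 ` (A - B) \<union> (\<sigma>2 \<circ> \<sigma>1) ` (A - B))"
      using cover finD by (intro card_mono) auto
    also have "\<dots> \<le> card (A - B) + card (\<sigma>1 ` (A - B)) + card (\<sigma>2 ` (A - B)) + card ((\<sigma>2 \<circ> \<sigma>1) ` (A - B))"
      by (meson add_le_mono card_Un_le dual_order.trans le_refl)
    also have "\<dots> \<le> 4 * card (A - B)"
      using card_image_le[OF finD, of \<sigma>1] card_image_le[OF finD, of \<sigma>2] card_image_le[OF finD, of "\<sigma>2 \<circ> \<sigma>1"]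
      by linarith
    finally have "card A \<le> 4 * card (A - B)" .
    then have "real (card B) \<le> 3/4 * real (card A)" using cardAB by linarith
    then show ?thesis using tA tB by simp
  next
    case False
    then have N1: "card N \<le> 1" by simp
    obtain x0 where x0: "x0 \<in> A" "x0 \<notin> B"
      using assms tA tB BA by (metis card_mono finB finA not_le subsetI)
    have x0h: "x0 \<in> hcube k" using x0 A_def by auto
    define \<phi> where "\<phi> = (\<lambda>z::nat\<Rightarrow>real. \<lambda>i. if i \<in> R' then z i else x0 i)"
    have finR: "finite R'" unfolding R'_def by auto
    have lin_eq: "lin_apply L k (\<phi> z) i = lin_apply L k x0 i" if "i \<le> m" for z i
      unfolding lin_apply_def
    proof (rule sum.cong)
      fix j assume "j \<in> {..<k}"
      then show "L i j * \<phi> z j = L i j * x0 j"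
        using notS[of j i] that unfolding \<phi>_def R'_def by (cases "i = m") auto
    qed simp
    have map: "\<phi> ` (R' \<rightarrow>\<^sub>E {0,1}) \<subseteq> A - B"
    proof
      fix y assume "y \<in> \<phi> ` (R' \<rightarrow>\<^sub>E {0,1})"
      then obtain z where z: "z \<in> R' \<rightarrow>\<^sub>E {0,1}" "y = \<phi> z" by blast
      have "y \<in> hcube k"
        using z x0h unfolding hcube_def \<phi>_def R'_def by (auto simp: PiE_iff extensional_def)
      then show "y \<in> A - B" using x0 lin_eq z(2) unfolding A_def B_def
        by (auto simp: less_imp_le)
    qed
    have inj: "inj_on \<phi> (R' \<rightarrow>\<^sub>E {0,1})"
    proof
      fix z z' assume "z \<in> R' \<rightarrow>\<^sub>E {0,1}" "z' \<in> R' \<rightarrow>\<^sub>E {0,1}" "\<phi> z = \<phi> z'"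
      then show "z = z'" unfolding \<phi>_def
        by (metis (no_types, lifting) PiE_ext)
    qed
    have "card (R' \<rightarrow>\<^sub>E ({0,1}::real set)) = 2 ^ card R'"
      using finR by (simp add: card_PiE numeral_2_eq_2)
    then have "2 ^ card R' \<le> card (A - B)"
      using card_inj_on_le[OF inj map] finA by auto
    then have c1: "(2::real) ^ card R' \<le> real (card (A - B))"
      by (metis of_nat_le_iff of_nat_numeral of_nat_power)
    have "real k - real (card S) - 1 \<le> real (card R')" using cardR N1 cardS by linarith
    then have "2 powr (real k - real (card S) - 1) \<le> 2 powr (real (card R'))"
      by (intro powr_mono) auto
    also have "\<dots> = 2 ^ card R'" by (simp add: powr_realpow)
    finally have "2 powr (real k - real (card S) - 1) \<le> real (card (A - B))" using c1 by linarith
    then have "real (card B) \<le> real (card A) - 2 powr (real k - real (card S) - 1)"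
      using cardAB by simp
    then show ?thesis using tA tB S_def by simp
  qed
qed

end
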